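(* Let $m,n\ge 0$ be integers with $m-n\equiv 1\pmod 2$, put $N=m+n$ and $k=\frac{N-1}{2}$, and let $1<r<\infty$. Then $$\left(\frac{2}{r+1}+\binom{N}{k}^r+\sum_{\substack{j=0\\ j\ne k}}^{N-1}\frac{\binom{N}{j+1}^{r+1}-\binom{N}{j}^{r+1}}{(r+1)\left[\binom{N}{j+1}-\binom{N}{j}\right]}\right)^{1/r} \le 2^m\Big(\sum_{j=0}^{n}\binom{n}{j}^r\Big)^{1/r}.$$
   Context: Binomial coefficients have their usual meaning. *)

theory Defs
  imports Complex_Main
begin

end

theory Submission imports Defs "HOL-Analysis.Analysis" begin

lemma tangent_powr:
  fixes b t r :: real assumes "b > 0" "t > 0" "r \<ge> 1"
  shows "b powr r - t powr r \<ge> r * t powr (r - 1) * (b - t)"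
proof -
  have d: "((\<lambda>x. x powr r) has_field_derivative r * t powr (r - 1)) (at t within {0<..})"
    using assms by (auto intro!: derivative_eq_intros)
  show ?thesis
    using convex_on_imp_above_tangent[OF powr_convex[OF assms(3)] _ _ _ d] assms
    by (simp add: interior_open)
qed

lemma hh:
  fixes a b r :: real assumes "0 < b" "b < a" "r \<ge> 1"
  shows "a powr (r+1) - b powr (r+1) \<le> (r+1)/2 * (a - b) * (a powr r + b powr r)"
proof -
  define f where "f t = (r+1)/2 * (t - b) * (t powr r + b powr r) - t powr (r+1)" for t
  have "f b \<le> f a"
  proof (rule DERIV_nonneg_imp_increasing_open[of b a f])
    fix t assume t: "b < t" "t < a"
    have tp: "t > 0" using t assms by simp
    have D: "(f has_real_derivative
        (r+1)/2 * ((t powr r + b powr r) + (t - b) * (r * t powr (r - 1))) - (r+1) * t powr r) (at t)"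
      unfolding f_def using tp
      by (auto intro!: derivative_eq_intros simp: field_simps)
    have tg: "b powr r - t powr r \<ge> r * t powr (r - 1) * (b - t)"
      using tangent_powr[OF assms(1) tp assms(3)] .
    have "(r+1)/2 * ((t powr r + b powr r) + (t - b) * (r * t powr (r - 1))) - (r+1) * t powr r
        = (r+1)/2 * (b powr r - t powr r - r * t powr (r - 1) * (b - t))"
      by (simp add: algebra_simps)
    also have "\<dots> \<ge> 0" using tg assms by (intro mult_nonneg_nonneg) auto
    finally show "\<exists>y. (f has_real_derivative y) (at t) \<and> 0 \<le> y" using D by blast
  next
    show "continuous_on {b..a} f" unfolding f_def using assms
      by (intro continuous_intros) auto
  qed (use assms in auto)
  then show ?thesis unfolding f_def by (simp add: algebra_simps)
qed


lemma term_bound: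
  fixes a b r :: real assumes "0 < a" "0 < b" "a \<noteq> b" "r \<ge> 1"
  shows "(a powr (r+1) - b powr (r+1)) / ((r+1) * (a - b)) \<le> (a powr r + b powr r)/2"
    and "0 \<le> (a powr (r+1) - b powr (r+1)) / ((r+1) * (a - b))"
proof -
  have "(a powr (r+1) - b powr (r+1)) / ((r+1) * (a - b)) \<le> (a powr r + b powr r)/2
     \<and> 0 \<le> (a powr (r+1) - b powr (r+1)) / ((r+1) * (a - b))"
  proof (cases "b < a")
    case True
    have h: "a powr (r+1) - b powr (r+1) \<le> (r+1)/2 * (a - b) * (a powr r + b powr r)"
      using hh[OF assms(2) True assms(4)] .
    have p: "(r+1) * (a - b) > 0" using True assms by simp
    have n: "b powr (r+1) < a powr (r+1)" using True assms by (intro powr_less_mono2) auto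
    show ?thesis using h p n by (auto simp: divide_simps algebra_simps)
  next
    case False
    then have ab: "a < b" using assms by auto
    have h: "b powr (r+1) - a powr (r+1) \<le> (r+1)/2 * (b - a) * (b powr r + a powr r)"
      using hh[OF assms(1) ab assms(4)] .
    have p: "(r+1) * (a - b) < 0" using ab assms by (simp add: mult_pos_neg)
    have n: "a powr (r+1) < b powr (r+1)" using ab assms by (intro powr_less_mono2) auto
    show ?thesis using h p n by (auto simp: divide_simps algebra_simps)
  qed
  then show "(a powr (r+1) - b powr (r+1)) / ((r+1) * (a - b)) \<le> (a powr r + b powr r)/2"
    and "0 \<le> (a powr (r+1) - b powr (r+1)) / ((r+1) * (a - b))" by auto
qed

lemma two_le: fixes r :: real assumes "1 \<le> r" shows "1 \<le> 2 powr r / 2"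
proof -
  have "2 powr 1 \<le> 2 powr r" using assms by (intro powr_mono) auto
  then show ?thesis by simp
qed

lemma power_mean:
  fixes a b r :: real assumes "0 \<le> a" "0 \<le> b" "r \<ge> 1"
  shows "(a + b) powr r \<le> 2 powr r * ((a powr r + b powr r) / 2)"
proof (cases "a = 0 \<or> b = 0")
  case True
  have "1 \<le> 2 powr r / 2"
    by (rule two_le[OF assms(3)])
  then have t2: "2 \<le> 2 powr r" by simp
  have x: "\<And>x::real. 0 \<le> x \<Longrightarrow> 2 * x \<le> x * 2 powr r"
    using t2 by (metis mult.commute mult_left_mono)
  show ?thesis using True assms
    by (auto simp: field_simps intro!: x)
next
  case False
  then have ap: "a > 0" "b > 0" using assms by auto
  have "((1 - 1/2) *\<^sub>R a + (1/2) *\<^sub>R b) powr r \<le> (1 - 1/2) * a powr r + (1/2) * b powr r"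
    using convex_onD[OF powr_convex[OF assms(3)], of "1/2" a b] ap by auto
  then have "((a + b)/2) powr r \<le> (a powr r + b powr r) / 2" by (simp add: field_simps)
  moreover have "(a + b) powr r = 2 powr r * ((a + b)/2) powr r"
  proof -
    have "2 powr r * ((a + b)/2) powr r = (2 * ((a + b)/2)) powr r"
      using ap by (intro powr_mult[symmetric])
    moreover have "2 * ((a + b)/2) = a + b" by simp
    ultimately show ?thesis by metis
  qed
  ultimately show ?thesis by (simp add: mult_left_mono)
qed

lemma step_sum:
  fixes r :: real assumes "r \<ge> 1"
  shows "(\<Sum>i\<le>Suc M. real (Suc M choose i) powr r) \<le> 2 powr r * (\<Sum>i\<le>M. real (M choose i) powr r)"
proof -
  define c where "c i = real (M choose i) powr r" for i
  have c0: "c 0 = 1" by (simp add: c_def)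
  have cM: "c (Suc M) = 0" by (simp add: c_def)
  have shift: "(\<Sum>i\<le>M. c (Suc i)) = (\<Sum>i\<le>M. c i) - 1"
  proof -
    have "(\<Sum>i\<le>Suc M. c i) = c 0 + (\<Sum>i\<le>M. c (Suc i))" by (rule sum.atMost_Suc_shift)
    moreover have "(\<Sum>i\<le>Suc M. c i) = (\<Sum>i\<le>M. c i) + c (Suc M)" by simp
    ultimately show ?thesis using c0 cM by simp
  qed
  have e2: "(\<Sum>i\<le>M. 2 powr r * ((c (Suc i) + c i) / 2)) = 2 powr r / 2 * (\<Sum>i\<le>M. c (Suc i) + c i)"
    unfolding sum_distrib_left by (intro sum.cong) (auto simp: field_simps)
  have e3: "(\<Sum>i\<le>M. 2 powr r * ((c (Suc i) + c i) / 2)) = 2 powr r / 2 * (2 * (\<Sum>i\<le>M. c i) - 1)"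
    using e2 shift by (simp add: sum.distrib)
  have "(\<Sum>i\<le>Suc M. real (Suc M choose i) powr r)
      = 1 + (\<Sum>i\<le>M. (real (M choose Suc i) + real (M choose i)) powr r)"
    by (subst sum.atMost_Suc_shift) (simp add: add.commute)
  also have "\<dots> \<le> 1 + (\<Sum>i\<le>M. 2 powr r * ((c (Suc i) + c i) / 2))"
    unfolding c_def using assms by (intro add_left_mono sum_mono power_mean) auto
  finally have A: "(\<Sum>i\<le>Suc M. real (Suc M choose i) powr r) \<le> 1 + 2 powr r / 2 * (2 * (\<Sum>i\<le>M. c i) - 1)"
    using e3 by simp
  have "1 \<le> 2 powr r / 2" by (rule two_le[OF assms])
  then have "1 + 2 powr r / 2 * (2 * (\<Sum>i\<le>M. c i) - 1) \<le> 2 powr r * (\<Sum>i\<le>M. c i)"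
    by (simp add: algebra_simps)
  with A show ?thesis unfolding c_def by linarith
qed

lemma iter_sum:
  fixes r :: real assumes "r \<ge> 1"
  shows "(\<Sum>i\<le>m + n. real ((m + n) choose i) powr r) \<le> (2 powr r) ^ m * (\<Sum>i\<le>n. real (n choose i) powr r)"
proof (induction m)
  case 0 then show ?case by simp
next
  case (Suc m)
  have "(\<Sum>i\<le>Suc m + n. real ((Suc m + n) choose i) powr r) \<le> 2 powr r * (\<Sum>i\<le>m + n. real ((m + n) choose i) powr r)"
    using step_sum[OF assms, of "m+n"] by simp
  also have "\<dots> \<le> 2 powr r * ((2 powr r) ^ m * (\<Sum>i\<le>n. real (n choose i) powr r))"
    using Suc by (intro mult_left_mono) auto
  finally show ?case by simp
qed


lemma term_bound':
  fixes a b r :: real assumes "0 < a" "0 < b" "r \<ge> 1"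
  shows "(a powr (r+1) - b powr (r+1)) / ((r+1) * (a - b)) \<le> (a powr r + b powr r)/2"
    and "0 \<le> (a powr (r+1) - b powr (r+1)) / ((r+1) * (a - b))"
  using term_bound[OF assms(1,2) _ assms(3)] assms by (cases "a = b"; simp)+

theorem mainTheorem13:
  fixes m n :: nat and r :: real
  assumes "odd (int m - int n)"
    and "1 < r"
  shows "(2 / (r + 1) + real ((m + n) choose ((m + n - 1) div 2)) powr r
          + (\<Sum>j\<in>{0..<m + n} - {(m + n - 1) div 2}.
               (real ((m + n) choose (j + 1)) powr (r + 1) - real ((m + n) choose j) powr (r + 1))
               / ((r + 1) * (real ((m + n) choose (j + 1)) - real ((m + n) choose j))))) powr (1 / r)
         \<le> 2 ^ m * (\<Sum>j = 0..n. real (n choose j) powr r) powr (1 / r)"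
proof -
  define N where "N = m + n"
  define k where "k = (m + n - 1) div 2"
  have Nk: "N = Suc (2 * k)" using assms(1) unfolding N_def k_def by presburger
  define b where "b j = real (N choose j)" for j
  define c where "c j = b j powr r" for j
  define g where "g j = (b (j + 1) powr (r + 1) - b j powr (r + 1)) / ((r + 1) * (b (j + 1) - b j))" for j
  define S where "S = (\<Sum>j\<le>N. c j)"
  define A where "A = {0..<N}"
  have r1: "r \<ge> 1" using assms by simp
  have bpos: "b j > 0" if "j \<le> N" for j using that unfolding b_def by simp
  have gb: "g j \<le> (c j + c (j+1)) / 2" if "j < N" for j
    using term_bound'(1)[OF bpos bpos r1, of "j+1" j] that unfolding g_def c_def by (simp add: add.commute)
  have g0: "g j \<ge> 0" if "j < N" for j
    using term_bound'(2)[OF bpos bpos r1, of "j+1" j] that unfolding g_def by simp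
  have kA: "k \<in> A" unfolding A_def using Nk by simp
  have c0: "c 0 = 1" and cN: "c N = 1" unfolding c_def b_def by simp_all
  have ck: "c (k+1) = c k"
  proof -
    have "N choose (k+1) = N choose (N - (k+1))" by (rule binomial_symmetric) (use Nk in simp)
    also have "N - (k+1) = k" using Nk by simp
    finally show ?thesis unfolding c_def b_def by simp
  qed
  define T where "T = (\<Sum>j\<in>A - {k}. g j)"
  have T0: "T \<ge> 0" unfolding T_def A_def using g0 by (intro sum_nonneg) auto
  have "T \<le> (\<Sum>j\<in>A - {k}. (c j + c (j+1)) / 2)"
    unfolding T_def A_def using gb by (intro sum_mono) auto
  also have "\<dots> = (\<Sum>j\<in>A. (c j + c (j+1)) / 2) - (c k + c (k+1)) / 2"
    using kA unfolding A_def by (simp add: sum_diff1)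
  also have "(\<Sum>j\<in>A. (c j + c (j+1)) / 2) = ((\<Sum>j<N. c j) + (\<Sum>j<N. c (Suc j))) / 2"
    unfolding A_def by (simp add: atLeast0LessThan sum.distrib sum_divide_distrib[symmetric])
  also have "(\<Sum>j<N. c j) = S - 1" unfolding S_def using cN by (simp add: lessThan_Suc_atMost[symmetric])
  also have "(\<Sum>j<N. c (Suc j)) = S - 1"
  proof -
    have "S = (\<Sum>j<Suc N. c j)" unfolding S_def by (simp add: lessThan_Suc_atMost)
    also have "\<dots> = c 0 + (\<Sum>j<N. c (Suc j))" by (rule sum.lessThan_Suc_shift)
    finally show ?thesis using c0 by simp
  qed
  finally have TS: "T \<le> S - 1 - c k" using ck by (simp add: field_simps)
  define X where "X = 2 / (r + 1) + c k + T"
  have X0: "X \<ge> 0" unfolding X_def using T0 assms by (simp add: c_def)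
  have "X \<le> 2 / (r + 1) + S - 1" unfolding X_def using TS by simp
  also have "\<dots> \<le> S" using assms by (simp add: divide_simps)
  also have "S \<le> (2 powr r) ^ m * (\<Sum>j\<le>n. real (n choose j) powr r)"
    unfolding S_def c_def b_def N_def using iter_sum[OF r1, of m n] by simp
  finally have XS: "X \<le> (2 powr r) ^ m * (\<Sum>j\<le>n. real (n choose j) powr r)" .
  have "X powr (1/r) \<le> ((2 powr r) ^ m * (\<Sum>j\<le>n. real (n choose j) powr r)) powr (1/r)"
    using XS X0 assms by (intro powr_mono2) auto
  also have "\<dots> = ((2 powr r) ^ m) powr (1/r) * (\<Sum>j\<le>n. real (n choose j) powr r) powr (1/r)"
    by (intro powr_mult)
  also have "((2 powr r) ^ m) powr (1/r) = (2::real) ^ m"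
  proof -
    have "((2 powr r) ^ m) powr (1/r) = ((2::real) powr (real m * r)) powr (1/r)"
      by (simp add: powr_power)
    also have "\<dots> = 2 powr (real m)" using assms by (simp add: powr_powr)
    also have "\<dots> = 2 ^ m" by (simp add: powr_realpow)
    finally show ?thesis .
  qed
  finally have F: "X powr (1/r) \<le> 2 ^ m * (\<Sum>j\<le>n. real (n choose j) powr r) powr (1/r)" .
  have "X = 2 / (r + 1) + real ((m + n) choose ((m + n - 1) div 2)) powr r
          + (\<Sum>j\<in>{0..<m + n} - {(m + n - 1) div 2}.
               (real ((m + n) choose (j + 1)) powr (r + 1) - real ((m + n) choose j) powr (r + 1))
               / ((r + 1) * (real ((m + n) choose (j + 1)) - real ((m + n) choose j))))"
    unfolding X_def T_def A_def g_def c_def b_def N_def k_def by simp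
  moreover have "(\<Sum>j = 0..n. real (n choose j) powr r) = (\<Sum>j\<le>n. real (n choose j) powr r)"
    by (simp add: atLeast0AtMost)
  ultimately show ?thesis using F by simp
qed

end
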